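(* Let $\mathcal{G}$ be a finite groupoid and $\mathcal{H}$ a connected wide subgroupoid of $\mathcal{G}$. Then $\mathbb{C}[\mathcal{G}/\mathcal{H}]\cong Y_\mathcal{H}$ as functors $\mathcal{G}\to\mathbf{Vect}_\mathbb{C}$.
   Context: A groupoid is a category in which every morphism is invertible; all groupoids are finite and nonempty; $gg'$ denotes composition. A subgroupoid is wide if it contains all objects, connected if any two of its objects are joined by one of its morphisms. For $x\in\mathcal{G}_0$ let $\mathrm{Mor}_\mathcal{G}(-,x):=\coprod_{y\in\mathcal{G}_0}\mathcal{G}(y,x)$ with equivalence relation $a\sim_{\mathcal{H},x}b\iff a^{-1}b\in\mathcal{H}_1$, class of $a$ written $a\mathcal{H}$. The $\mathcal{G}$-set $\mathcal{G}/\mathcal{H}$ sends $x$ to $\mathrm{Mor}_\mathcal{G}(-,x)/\sim_{\mathcal{H},x}$ and $g:x\to y$ to $a\mathcal{H}\mapsto ga\mathcal{H}$; $\mathbb{C}[\mathcal{G}/\mathcal{H}]$ is its composite with the free complex vector space functor. $Y_\mathcal{H}:\mathcal{G}\to\mathbf{Vect}_\mathbb{C}$ is given by $Y_\mathcal{H}(G):=\{f:\mathrm{Mor}_\mathcal{G}(-,G)\to\mathbb{C}\mid f(gh)=f(g)\text{ for all } g\in\mathrm{Mor}_\mathcal{G}(-,G),\ h\in\mathcal{H}_1,\ \mathrm{dom}\,g=\mathrm{cod}\,h\}$ (pointwise vector space structure) and, for $g:G\to G'$, $Y_\mathcal{H}(g)(f):=f(g^{-1}\,-)$. *)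

theory Defs
  imports Complex_Main
begin

text \<open>A (small) category whose morphisms are all invertible. Composition
  convention: comp g a is "g a", i.e. g after a, defined when dom g = cod a.\<close>

record ('o, 'm) groupoid =
  Obj   :: "'o set"
  Mor   :: "'m set"
  dom   :: "'m \<Rightarrow> 'o"
  cod   :: "'m \<Rightarrow> 'o"
  comp  :: "'m \<Rightarrow> 'm \<Rightarrow> 'm"
  ident :: "'o \<Rightarrow> 'm"

definition finite_groupoid :: "('o, 'm) groupoid \<Rightarrow> bool" where
  "finite_groupoid G \<longleftrightarrow>
     finite (Obj G) \<and> finite (Mor G) \<and> Obj G \<noteq> {} \<and>
     (\<forall>g\<in>Mor G. dom G g \<in> Obj G \<and> cod G g \<in> Obj G) \<and>
     (\<forall>g\<in>Mor G. \<forall>f\<in>Mor G. dom G g = cod G f \<longrightarrow>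
         comp G g f \<in> Mor G \<and> dom G (comp G g f) = dom G f \<and> cod G (comp G g f) = cod G g) \<and>
     (\<forall>h\<in>Mor G. \<forall>g\<in>Mor G. \<forall>f\<in>Mor G. dom G h = cod G g \<longrightarrow> dom G g = cod G f \<longrightarrow>
         comp G h (comp G g f) = comp G (comp G h g) f) \<and>
     (\<forall>x\<in>Obj G. ident G x \<in> Mor G \<and> dom G (ident G x) = x \<and> cod G (ident G x) = x) \<and>
     (\<forall>g\<in>Mor G. comp G g (ident G (dom G g)) = g \<and> comp G (ident G (cod G g)) g = g) \<and>
     (\<forall>g\<in>Mor G. \<exists>h\<in>Mor G. dom G h = cod G g \<and> cod G h = dom G g \<and>
         comp G h g = ident G (dom G g) \<and> comp G g h = ident G (cod G g))"

definition ginv :: "('o, 'm) groupoid \<Rightarrow> 'm \<Rightarrow> 'm" where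
  "ginv G g = (THE h. h \<in> Mor G \<and> dom G h = cod G g \<and> cod G h = dom G g \<and>
                  comp G h g = ident G (dom G g) \<and> comp G g h = ident G (cod G g))"

text \<open>A subgroupoid, given by its set of morphisms H1 (objects are all objects
  of G since it is wide), with the composition of G.\<close>

definition wide_subgroupoid :: "('o, 'm) groupoid \<Rightarrow> 'm set \<Rightarrow> bool" where
  "wide_subgroupoid G H1 \<longleftrightarrow>
     H1 \<subseteq> Mor G \<and>
     (\<forall>x\<in>Obj G. ident G x \<in> H1) \<and>
     (\<forall>g\<in>H1. \<forall>f\<in>H1. dom G g = cod G f \<longrightarrow> comp G g f \<in> H1) \<and>
     (\<forall>g\<in>H1. ginv G g \<in> H1)"

definition connected_sub :: "('o, 'm) groupoid \<Rightarrow> 'm set \<Rightarrow> bool" where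
  "connected_sub G H1 \<longleftrightarrow>
     (\<forall>x\<in>Obj G. \<forall>y\<in>Obj G. \<exists>h\<in>H1. dom G h = x \<and> cod G h = y)"

definition MorTo :: "('o, 'm) groupoid \<Rightarrow> 'o \<Rightarrow> 'm set" where
  "MorTo G x = {a \<in> Mor G. cod G a = x}"

definition cls :: "('o, 'm) groupoid \<Rightarrow> 'm set \<Rightarrow> 'o \<Rightarrow> 'm \<Rightarrow> 'm set" where
  "cls G H1 x a = {b \<in> MorTo G x. comp G (ginv G a) b \<in> H1}"

definition classes :: "('o, 'm) groupoid \<Rightarrow> 'm set \<Rightarrow> 'o \<Rightarrow> 'm set set" where
  "classes G H1 x = cls G H1 x ` MorTo G x"

definition qmap :: "('o, 'm) groupoid \<Rightarrow> 'm set \<Rightarrow> 'm \<Rightarrow> 'm set \<Rightarrow> 'm set" where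
  "qmap G H1 g C = cls G H1 (cod G g) (comp G g (SOME a. a \<in> C))"

text \<open>C[G/H]: the free complex vector space on (G/H)(x), realised as the
  complex-valued functions on classes vanishing outside (G/H)(x) (the sets
  are finite), and the linear extension of qmap.\<close>
definition CGH :: "('o, 'm) groupoid \<Rightarrow> 'm set \<Rightarrow> 'o \<Rightarrow> ('m set \<Rightarrow> complex) set" where
  "CGH G H1 x = {f. \<forall>C. C \<notin> classes G H1 x \<longrightarrow> f C = 0}"

definition CGH_map :: "('o, 'm) groupoid \<Rightarrow> 'm set \<Rightarrow> 'm \<Rightarrow> ('m set \<Rightarrow> complex) \<Rightarrow> ('m set \<Rightarrow> complex)" where
  "CGH_map G H1 g f = (\<lambda>D. \<Sum>C\<in>{C \<in> classes G H1 (dom G g). qmap G H1 g C = D}. f C)"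

text \<open>Y_H: functions on Mor_G(-,x) (extended by 0 outside) invariant under right
  multiplication by H.\<close>
definition YH :: "('o, 'm) groupoid \<Rightarrow> 'm set \<Rightarrow> 'o \<Rightarrow> ('m \<Rightarrow> complex) set" where
  "YH G H1 x = {f. (\<forall>a. a \<notin> MorTo G x \<longrightarrow> f a = 0) \<and>
      (\<forall>g\<in>MorTo G x. \<forall>h\<in>H1. dom G g = cod G h \<longrightarrow> f (comp G g h) = f g)}"

definition YH_map :: "('o, 'm) groupoid \<Rightarrow> 'm \<Rightarrow> ('m \<Rightarrow> complex) \<Rightarrow> ('m \<Rightarrow> complex)" where
  "YH_map G g f = (\<lambda>a. if a \<in> MorTo G (cod G g) then f (comp G (ginv G g) a) else 0)"

text \<open>Natural isomorphism between two functors G \<rightarrow> Vect_C, each given by its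
  object part (a family of complex vector spaces of functions with pointwise
  operations) and morphism part.\<close>
definition nat_iso ::
  "('o, 'm) groupoid \<Rightarrow> ('o \<Rightarrow> ('a \<Rightarrow> complex) set) \<Rightarrow> ('m \<Rightarrow> ('a \<Rightarrow> complex) \<Rightarrow> ('a \<Rightarrow> complex))
   \<Rightarrow> ('o \<Rightarrow> ('b \<Rightarrow> complex) set) \<Rightarrow> ('m \<Rightarrow> ('b \<Rightarrow> complex) \<Rightarrow> ('b \<Rightarrow> complex))
   \<Rightarrow> ('o \<Rightarrow> ('a \<Rightarrow> complex) \<Rightarrow> ('b \<Rightarrow> complex)) \<Rightarrow> bool" where
  "nat_iso G V A W B \<eta> \<longleftrightarrow>
     (\<forall>x\<in>Obj G.
        bij_betw (\<eta> x) (V x) (W x) \<and>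
        (\<forall>u\<in>V x. \<forall>v\<in>V x. \<eta> x (\<lambda>i. u i + v i) = (\<lambda>j. \<eta> x u j + \<eta> x v j)) \<and>
        (\<forall>c. \<forall>u\<in>V x. \<eta> x (\<lambda>i. c * u i) = (\<lambda>j. c * \<eta> x u j))) \<and>
     (\<forall>g\<in>Mor G. \<forall>v\<in>V (dom G g). \<eta> (cod G g) (A g v) = B g (\<eta> (dom G g) v))"

end

theory Submission
  imports Defs
begin

locale gpd =
  fixes G :: "('o, 'm) groupoid"
  assumes fg: "finite_groupoid G"
begin

lemma fin_mor: "finite (Mor G)" using fg unfolding finite_groupoid_def by blast

lemma dom_in: "g \<in> Mor G \<Longrightarrow> dom G g \<in> Obj G"
  and cod_in: "g \<in> Mor G \<Longrightarrow> cod G g \<in> Obj G"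
  using fg unfolding finite_groupoid_def by blast+

lemma comp_mor: "g \<in> Mor G \<Longrightarrow> f \<in> Mor G \<Longrightarrow> dom G g = cod G f \<Longrightarrow> comp G g f \<in> Mor G"
  and comp_dom: "g \<in> Mor G \<Longrightarrow> f \<in> Mor G \<Longrightarrow> dom G g = cod G f \<Longrightarrow> dom G (comp G g f) = dom G f"
  and comp_cod: "g \<in> Mor G \<Longrightarrow> f \<in> Mor G \<Longrightarrow> dom G g = cod G f \<Longrightarrow> cod G (comp G g f) = cod G g"
  using fg unfolding finite_groupoid_def by blast+

lemma assoc: "h \<in> Mor G \<Longrightarrow> g \<in> Mor G \<Longrightarrow> f \<in> Mor G \<Longrightarrow> dom G h = cod G g \<Longrightarrow> dom G g = cod G f \<Longrightarrow>
   comp G h (comp G g f) = comp G (comp G h g) f"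
  using fg unfolding finite_groupoid_def by blast

lemma id_mor: "x \<in> Obj G \<Longrightarrow> ident G x \<in> Mor G"
  and id_dom: "x \<in> Obj G \<Longrightarrow> dom G (ident G x) = x"
  and id_cod: "x \<in> Obj G \<Longrightarrow> cod G (ident G x) = x"
  using fg unfolding finite_groupoid_def by blast+

lemma id_r: "g \<in> Mor G \<Longrightarrow> comp G g (ident G (dom G g)) = g"
  and id_l: "g \<in> Mor G \<Longrightarrow> comp G (ident G (cod G g)) g = g"
  using fg unfolding finite_groupoid_def by blast+

lemma id_l': "g \<in> Mor G \<Longrightarrow> cod G g = x \<Longrightarrow> comp G (ident G x) g = g"
  using id_l by blast

definition isinv where "isinv g h \<longleftrightarrow> h \<in> Mor G \<and> dom G h = cod G g \<and> cod G h = dom G g \<and>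
                  comp G h g = ident G (dom G g) \<and> comp G g h = ident G (cod G g)"

lemma inv_ex: "g \<in> Mor G \<Longrightarrow> \<exists>h. isinv g h"
  using fg unfolding finite_groupoid_def isinv_def by blast

lemma inv_uniq: assumes "g \<in> Mor G" "isinv g h" "isinv g h'" shows "h = h'"
proof -
  have "h = comp G h (ident G (cod G g))" using assms id_r[of h] unfolding isinv_def by simp
  also have "\<dots> = comp G h (comp G g h')" using assms unfolding isinv_def by simp
  also have "\<dots> = comp G (comp G h g) h'" using assms assoc[of h g h'] unfolding isinv_def by simp
  also have "\<dots> = comp G (ident G (dom G g)) h'" using assms unfolding isinv_def by simp
  also have "\<dots> = h'" using assms id_l[of h'] unfolding isinv_def by simp
  finally show ?thesis .
qed

lemma ginv_isinv: "g \<in> Mor G \<Longrightarrow> isinv g (ginv G g)"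
proof -
  assume g: "g \<in> Mor G"
  have "\<exists>!h. isinv g h" using inv_ex[OF g] inv_uniq[OF g] by blast
  then have "isinv g (THE h. isinv g h)" by (rule theI')
  then show ?thesis unfolding ginv_def isinv_def by simp
qed

lemma ginv_eq: "g \<in> Mor G \<Longrightarrow> isinv g h \<Longrightarrow> ginv G g = h"
  using inv_uniq ginv_isinv by blast

lemma ginv_mor: "g \<in> Mor G \<Longrightarrow> ginv G g \<in> Mor G"
  and ginv_dom: "g \<in> Mor G \<Longrightarrow> dom G (ginv G g) = cod G g"
  and ginv_cod: "g \<in> Mor G \<Longrightarrow> cod G (ginv G g) = dom G g"
  and ginv_l: "g \<in> Mor G \<Longrightarrow> comp G (ginv G g) g = ident G (dom G g)"
  and ginv_r: "g \<in> Mor G \<Longrightarrow> comp G g (ginv G g) = ident G (cod G g)"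
  using ginv_isinv unfolding isinv_def by blast+

lemma ginv_ginv: "g \<in> Mor G \<Longrightarrow> ginv G (ginv G g) = g"
  by (rule ginv_eq) (auto simp: isinv_def ginv_mor ginv_dom ginv_cod ginv_l ginv_r)

lemma ginv_comp: assumes "g \<in> Mor G" "f \<in> Mor G" "dom G g = cod G f"
  shows "ginv G (comp G g f) = comp G (ginv G f) (ginv G g)"
proof (rule ginv_eq)
  show "comp G g f \<in> Mor G" using assms comp_mor by blast
  have m: "comp G (ginv G f) (ginv G g) \<in> Mor G"
    using assms by (simp add: comp_mor ginv_mor ginv_dom ginv_cod)
  have "comp G (comp G (ginv G f) (ginv G g)) (comp G g f)
      = comp G (ginv G f) (comp G (comp G (ginv G g) g) f)"
    using assms by (simp add: assoc comp_mor ginv_mor ginv_dom ginv_cod comp_dom comp_cod)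
  also have "\<dots> = ident G (dom G f)"
    using assms by (simp add: ginv_l id_l ginv_mor)
  finally have 1: "comp G (comp G (ginv G f) (ginv G g)) (comp G g f) = ident G (dom G f)" .
  have "comp G (comp G g f) (comp G (ginv G f) (ginv G g))
      = comp G g (comp G (comp G f (ginv G f)) (ginv G g))"
    using assms by (simp add: assoc comp_mor ginv_mor ginv_dom ginv_cod comp_dom comp_cod)
  also have "\<dots> = ident G (cod G g)"
    using assms id_l[of "ginv G g"] by (simp add: ginv_r ginv_mor ginv_cod ginv_dom)
  finally have 2: "comp G (comp G g f) (comp G (ginv G f) (ginv G g)) = ident G (cod G g)" .
  show "isinv (comp G g f) (comp G (ginv G f) (ginv G g))"
    unfolding isinv_def using assms m 1 2
    by (simp add: comp_dom comp_cod ginv_mor ginv_dom ginv_cod)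
qed

end

locale sgpd = gpd +
  fixes H
  assumes ws: "wide_subgroupoid G H"
begin

lemma H_mor: "h \<in> H \<Longrightarrow> h \<in> Mor G"
  and H_id: "x \<in> Obj G \<Longrightarrow> ident G x \<in> H"
  and H_comp: "g \<in> H \<Longrightarrow> f \<in> H \<Longrightarrow> dom G g = cod G f \<Longrightarrow> comp G g f \<in> H"
  and H_inv: "g \<in> H \<Longrightarrow> ginv G g \<in> H"
  using ws unfolding wide_subgroupoid_def by blast+

lemma cls_mem: "b \<in> cls G H x a \<longleftrightarrow> b \<in> MorTo G x \<and> comp G (ginv G a) b \<in> H"
  unfolding cls_def by simp

lemma MorTo_iff: "a \<in> MorTo G x \<longleftrightarrow> a \<in> Mor G \<and> cod G a = x"
  unfolding MorTo_def by simp

lemma cls_refl: "a \<in> MorTo G x \<Longrightarrow> a \<in> cls G H x a"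
  unfolding cls_mem MorTo_iff by (simp add: ginv_l H_id dom_in)

lemma rel_sym: assumes "a \<in> MorTo G x" "b \<in> MorTo G x" "comp G (ginv G a) b \<in> H"
  shows "comp G (ginv G b) a \<in> H"
proof -
  have "ginv G (comp G (ginv G a) b) = comp G (ginv G b) a"
    using assms unfolding MorTo_iff by (simp add: ginv_comp ginv_mor ginv_dom ginv_ginv)
  then show ?thesis using H_inv[OF assms(3)] by simp
qed

lemma rel_trans: assumes "a \<in> MorTo G x" "b \<in> MorTo G x" "c \<in> MorTo G x"
  "comp G (ginv G a) b \<in> H" "comp G (ginv G b) c \<in> H"
  shows "comp G (ginv G a) c \<in> H"
proof -
  have "comp G (comp G (ginv G a) b) (comp G (ginv G b) c)
      = comp G (ginv G a) (comp G (comp G b (ginv G b)) c)"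
    using assms unfolding MorTo_iff
    by (simp add: assoc comp_mor ginv_mor ginv_dom ginv_cod comp_dom comp_cod)
  also have "\<dots> = comp G (ginv G a) c"
    using assms unfolding MorTo_iff by (simp add: ginv_r id_l')
  finally show ?thesis using H_comp[OF assms(4,5)] assms unfolding MorTo_iff
    by (simp add: comp_dom comp_cod ginv_mor ginv_dom ginv_cod)
qed

lemma cls_eq_iff: assumes "a \<in> MorTo G x" "b \<in> MorTo G x"
  shows "cls G H x a = cls G H x b \<longleftrightarrow> comp G (ginv G a) b \<in> H"
proof
  assume "cls G H x a = cls G H x b"
  then show "comp G (ginv G a) b \<in> H" using cls_refl[OF assms(2)] cls_mem by blast
next
  assume r: "comp G (ginv G a) b \<in> H"
  have r': "comp G (ginv G b) a \<in> H" using rel_sym[OF assms r] .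
  show "cls G H x a = cls G H x b"
    unfolding cls_def using rel_trans[OF assms(1,2) _ r] rel_trans[OF assms(2,1) _ r']
    by auto
qed

lemma cls_of_mem: assumes "a \<in> MorTo G x" "b \<in> cls G H x a" shows "cls G H x b = cls G H x a"
  using assms cls_eq_iff cls_mem rel_sym by metis

lemma left_mult: assumes "k \<in> Mor G" "a \<in> MorTo G (dom G k)" "b \<in> MorTo G (dom G k)"
  shows "comp G (ginv G (comp G k a)) (comp G k b) = comp G (ginv G a) b"
proof -
  have "comp G (ginv G (comp G k a)) (comp G k b) = comp G (comp G (ginv G a) (ginv G k)) (comp G k b)"
    using assms unfolding MorTo_iff by (simp add: ginv_comp)
  also have "\<dots> = comp G (ginv G a) (comp G (comp G (ginv G k) k) b)"
    using assms unfolding MorTo_iff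
    by (simp add: assoc comp_mor ginv_mor ginv_dom ginv_cod comp_dom comp_cod)
  also have "\<dots> = comp G (ginv G a) b"
    using assms unfolding MorTo_iff by (simp add: ginv_l id_l')
  finally show ?thesis .
qed

lemma left_mult_cls: assumes "k \<in> Mor G" "a \<in> MorTo G (dom G k)" "b \<in> MorTo G (dom G k)"
  shows "cls G H (cod G k) (comp G k a) = cls G H (cod G k) (comp G k b) \<longleftrightarrow>
         cls G H (dom G k) a = cls G H (dom G k) b"
proof -
  have "comp G k a \<in> MorTo G (cod G k)" "comp G k b \<in> MorTo G (cod G k)"
    using assms unfolding MorTo_iff by (auto simp: comp_mor comp_cod)
  then show ?thesis using cls_eq_iff assms left_mult by metis
qed

definition eta where "eta x u = (\<lambda>a. if a \<in> MorTo G x then u (cls G H x a) else 0)"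

lemma comp_inv_cancel: assumes "g \<in> Mor G" "h \<in> Mor G" "dom G g = cod G h"
  shows "comp G (ginv G g) (comp G g h) = h"
proof -
  have "comp G (ginv G g) (comp G g h) = comp G (comp G (ginv G g) g) h"
    using assms assoc[of "ginv G g" g h] by (simp add: ginv_mor ginv_dom)
  then show ?thesis using assms by (simp add: ginv_l id_l')
qed

lemma comp_inv_cancel2: assumes "g \<in> Mor G" "h \<in> Mor G" "cod G g = cod G h"
  shows "comp G g (comp G (ginv G g) h) = h"
proof -
  have "comp G g (comp G (ginv G g) h) = comp G (comp G g (ginv G g)) h"
    using assms by (simp add: assoc ginv_mor ginv_cod ginv_dom)
  then show ?thesis using assms by (simp add: ginv_r id_l')
qed

lemma eta_in: "eta x u \<in> YH G H x"
proof -
  have "eta x u (comp G g h) = eta x u g" if g: "g \<in> MorTo G x" and h: "h \<in> H" and d: "dom G g = cod G h" for g h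
  proof -
    have hm: "h \<in> Mor G" using H_mor h by blast
    have gh: "comp G g h \<in> MorTo G x" using g hm d unfolding MorTo_iff by (simp add: comp_mor comp_cod)
    have "cls G H x g = cls G H x (comp G g h)"
      using cls_eq_iff[OF g gh] comp_inv_cancel[of g h] g hm d h unfolding MorTo_iff by simp
    then show ?thesis using g gh unfolding eta_def by simp
  qed
  then show ?thesis unfolding YH_def eta_def by auto
qed

lemma eta_inj: "inj_on (eta x) (CGH G H x)"
proof (rule inj_onI)
  fix u v assume u: "u \<in> CGH G H x" and v: "v \<in> CGH G H x" and e: "eta x u = eta x v"
  show "u = v"
  proof
    fix C show "u C = v C"
    proof (cases "C \<in> classes G H x")
      case True
      then obtain a where a: "a \<in> MorTo G x" "C = cls G H x a" unfolding classes_def by blast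
      then show ?thesis using fun_cong[OF e, of a] unfolding eta_def by simp
    next
      case False then show ?thesis using u v unfolding CGH_def by simp
    qed
  qed
qed

lemma eta_surj: assumes f: "f \<in> YH G H x" shows "f \<in> eta x ` CGH G H x"
proof -
  define u where "u = (\<lambda>C. if C \<in> classes G H x then f (SOME a. a \<in> C) else 0)"
  have uC: "u \<in> CGH G H x" unfolding u_def CGH_def by simp
  have "eta x u = f"
  proof
    fix a show "eta x u a = f a"
    proof (cases "a \<in> MorTo G x")
      case True
      define b where "b = (SOME b. b \<in> cls G H x a)"
      have b: "b \<in> cls G H x a" unfolding b_def using cls_refl[OF True] by (rule someI)
      have bm: "b \<in> MorTo G x" and hH: "comp G (ginv G a) b \<in> H" using b cls_mem by auto
      have beq: "comp G a (comp G (ginv G a) b) = b"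
        using True bm comp_inv_cancel2 unfolding MorTo_iff by auto
      have inv: "\<forall>g\<in>MorTo G x. \<forall>h\<in>H. dom G g = cod G h \<longrightarrow> f (comp G g h) = f g"
        using f unfolding YH_def by blast
      have "dom G a = cod G (comp G (ginv G a) b)"
        using True bm unfolding MorTo_iff by (simp add: comp_cod ginv_mor ginv_dom ginv_cod)
      then have "f (comp G a (comp G (ginv G a) b)) = f a"
        using inv True hH by blast
      then have "f b = f a" using beq by simp
      moreover have "cls G H x a \<in> classes G H x" using True unfolding classes_def by blast
      ultimately show ?thesis using True unfolding eta_def u_def b_def by simp
    next
      case False then show ?thesis using f unfolding eta_def YH_def by simp
    qed
  qed
  then show ?thesis using uC by blast
qed

lemma eta_bij: "bij_betw (eta x) (CGH G H x) (YH G H x)"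
  unfolding bij_betw_def using eta_inj eta_in eta_surj by blast

lemma qmap_cls: assumes g: "g \<in> Mor G" and c: "c \<in> MorTo G (dom G g)"
  shows "qmap G H g (cls G H (dom G g) c) = cls G H (cod G g) (comp G g c)"
proof -
  define e where "e = (SOME e. e \<in> cls G H (dom G g) c)"
  have e: "e \<in> cls G H (dom G g) c" unfolding e_def using cls_refl[OF c] by (rule someI)
  have em: "e \<in> MorTo G (dom G g)" using e cls_mem by auto
  have "cls G H (dom G g) e = cls G H (dom G g) c" using cls_of_mem[OF c e] .
  then have "cls G H (cod G g) (comp G g e) = cls G H (cod G g) (comp G g c)"
    using left_mult_cls[OF g em c] by simp
  then show ?thesis unfolding qmap_def e_def by simp
qed

lemma natural: assumes g: "g \<in> Mor G"
  shows "eta (cod G g) (CGH_map G H g v) = YH_map G g (eta (dom G g) v)"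
proof
  fix a show "eta (cod G g) (CGH_map G H g v) a = YH_map G g (eta (dom G g) v) a"
  proof (cases "a \<in> MorTo G (cod G g)")
    case True
    define b where "b = comp G (ginv G g) a"
    have bm: "b \<in> MorTo G (dom G g)" using True g unfolding b_def MorTo_iff
      by (simp add: comp_mor comp_cod ginv_mor ginv_dom ginv_cod)
    have gb: "comp G g b = a" using True g comp_inv_cancel2 unfolding b_def MorTo_iff by auto
    have S: "{C \<in> classes G H (dom G g). qmap G H g C = cls G H (cod G g) a} = {cls G H (dom G g) b}"
    proof (rule set_eqI, rule iffI)
      fix C assume "C \<in> {C \<in> classes G H (dom G g). qmap G H g C = cls G H (cod G g) a}"
      then obtain c where c: "c \<in> MorTo G (dom G g)" "C = cls G H (dom G g) c"
        and q: "qmap G H g C = cls G H (cod G g) a" unfolding classes_def by blast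
      have "cls G H (cod G g) (comp G g c) = cls G H (cod G g) (comp G g b)"
        using q qmap_cls[OF g c(1)] c(2) gb by simp
      then show "C \<in> {cls G H (dom G g) b}" using left_mult_cls[OF g c(1) bm] c(2) by simp
    next
      fix C assume "C \<in> {cls G H (dom G g) b}"
      then have C: "C = cls G H (dom G g) b" by simp
      then have "C \<in> classes G H (dom G g)" using bm unfolding classes_def by blast
      moreover have "qmap G H g C = cls G H (cod G g) a" using C qmap_cls[OF g bm] gb by simp
      ultimately show "C \<in> {C \<in> classes G H (dom G g). qmap G H g C = cls G H (cod G g) a}" by simp
    qed
    have "eta (cod G g) (CGH_map G H g v) a = v (cls G H (dom G g) b)"
      using True unfolding eta_def CGH_map_def S by simp
    also have "\<dots> = YH_map G g (eta (dom G g) v) a"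
      using True bm unfolding YH_map_def eta_def b_def by simp
    finally show ?thesis .
  next
    case False then show ?thesis unfolding eta_def YH_map_def by simp
  qed
qed

lemma main: "nat_iso G (CGH G H) (CGH_map G H) (YH G H) (YH_map G) eta"
  unfolding nat_iso_def using eta_bij natural by (auto simp: eta_def fun_eq_iff algebra_simps)

end

theorem theorem5p3:
  fixes G :: "('o, 'm) groupoid" and H1 :: "'m set"
  assumes "finite_groupoid G"
    and "wide_subgroupoid G H1"
    and "connected_sub G H1"
  shows "\<exists>\<eta>. nat_iso G (CGH G H1) (CGH_map G H1) (YH G H1) (YH_map G) \<eta>"
proof -
  interpret sgpd G H1 using assms by (unfold_locales) auto
  show ?thesis using main by blast
qed

end
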